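(* Let $R$ be a commutative Noetherian ring of prime characteristic $p$ and let $G$ be an $x$-torsion-free left $R[x,f]$-module. Then there is a radical ideal $\mathfrak{b}$ of $R$ such that $\operatorname{grann}_{R[x,f]}G=\mathfrak{b}R[x,f]=\bigoplus_{n\ge0}\mathfrak{b}x^n$.
   Context: $R[x,f]$ is the Frobenius skew polynomial ring: free left $R$-module on $(x^i)_{i\ge0}$, with $xr=r^px$. $G$ is $x$-torsion-free if $xg=0$ implies $g=0$. $\operatorname{grann}_{R[x,f]}G$ is the set of $\sum r_ix^i\in R[x,f]$ such that each $r_ix^i$ annihilates $G$. *)

theory Defs
  imports Main "HOL.Modules" "HOL-Computational_Algebra.Primes"
begin

definition is_ideal :: "'a::comm_ring_1 set \<Rightarrow> bool" where
  "is_ideal I \<longleftrightarrow> 0 \<in> I \<and> (\<forall>a\<in>I. \<forall>b\<in>I. a + b \<in> I) \<and> (\<forall>r. \<forall>a\<in>I. r * a \<in> I)"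

definition radical_ideal :: "'a::comm_ring_1 set \<Rightarrow> bool" where
  "radical_ideal I \<longleftrightarrow> is_ideal I \<and> (\<forall>r (n::nat). n > 0 \<longrightarrow> r ^ n \<in> I \<longrightarrow> r \<in> I)"

definition noetherian_ring :: "'a::comm_ring_1 itself \<Rightarrow> bool" where
  "noetherian_ring _ \<longleftrightarrow>
     (\<forall>I :: nat \<Rightarrow> 'a set. (\<forall>n. is_ideal (I n)) \<longrightarrow> (\<forall>n. I n \<subseteq> I (Suc n)) \<longrightarrow>
        (\<exists>N. \<forall>n\<ge>N. I n = I N))"

text \<open>Elements of the Frobenius skew polynomial ring R[x,f]: the free left R-module
  on (x^i), represented by finitely supported coefficient sequences
  (c represents the sum of c i x^i).\<close>
definition skew_elems :: "(nat \<Rightarrow> 'a::zero) set" where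
  "skew_elems = {c. finite {i. c i \<noteq> 0}}"

text \<open>A left R[x,f]-module structure on an R-module G (scalar multiplication scale)
  is given by the action phi of x: an additive map with phi (r g) = r^p phi g.\<close>
definition frob_module :: "('a::comm_ring_1 \<Rightarrow> 'g::ab_group_add \<Rightarrow> 'g) \<Rightarrow> nat \<Rightarrow> ('g \<Rightarrow> 'g) \<Rightarrow> bool" where
  "frob_module scale p phi \<longleftrightarrow> module scale \<and>
     (\<forall>g h. phi (g + h) = phi g + phi h) \<and>
     (\<forall>r g. phi (scale r g) = scale (r ^ p) (phi g))"

definition x_torsion_free :: "('g::ab_group_add \<Rightarrow> 'g) \<Rightarrow> bool" where
  "x_torsion_free phi \<longleftrightarrow> (\<forall>g. phi g = 0 \<longrightarrow> g = 0)"

text \<open>Graded annihilator: sums of r_i x^i with each r_i x^i annihilating G;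
  (r x^i) acts on g as r (phi^i g).\<close>
definition grann :: "('a::comm_ring_1 \<Rightarrow> 'g::ab_group_add \<Rightarrow> 'g) \<Rightarrow> ('g \<Rightarrow> 'g) \<Rightarrow> (nat \<Rightarrow> 'a) set" where
  "grann scale phi = {c \<in> skew_elems. \<forall>i g. scale (c i) ((phi ^^ i) g) = 0}"

text \<open>The extension b R[x,f]: finite sums of products b_j h_j with b_j in b, h_j in R[x,f]
  (left multiplication by an element of R acts coefficientwise).\<close>
definition ext_ideal :: "'a::comm_ring_1 set \<Rightarrow> (nat \<Rightarrow> 'a) set" where
  "ext_ideal b = {c. \<exists>n (bs :: nat \<Rightarrow> 'a) hs. (\<forall>j<n. bs j \<in> b \<and> hs j \<in> skew_elems) \<and>
                       c = (\<lambda>i. \<Sum>j<n. bs j * hs j i)}"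

definition graded_ideal :: "'a::comm_ring_1 set \<Rightarrow> (nat \<Rightarrow> 'a) set" where
  "graded_ideal b = {c \<in> skew_elems. \<forall>i. c i \<in> b}"

end

theory Submission
  imports Defs
begin

lemma phi_zero:
  assumes "frob_module scale p phi" shows "phi 0 = 0"
proof -
  have "phi (0 + 0) = phi 0 + phi 0" using assms unfolding frob_module_def by blast
  thus ?thesis by simp
qed

lemma iter_scale:
  assumes "frob_module scale p phi"
  shows "(phi ^^ i) (scale r g) = scale (r ^ (p ^ i)) ((phi ^^ i) g)"
proof (induction i)
  case 0
  then show ?case using assms unfolding frob_module_def by (simp add: module.scale_one)
next
  case (Suc i)
  have "(phi ^^ Suc i) (scale r g) = phi (scale (r ^ (p ^ i)) ((phi ^^ i) g))"
    using Suc by simp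
  also have "\<dots> = scale ((r ^ (p ^ i)) ^ p) ((phi ^^ Suc i) g)"
    using assms unfolding frob_module_def by simp
  also have "(r ^ (p ^ i)) ^ p = r ^ (p ^ Suc i)"
    by (simp add: power_mult[symmetric] mult.commute)
  finally show ?case .
qed

lemma iter_tf:
  assumes "x_torsion_free phi" "(phi ^^ i) g = 0" shows "g = 0"
  using assms(2)
proof (induction i arbitrary: g)
  case 0 then show ?case by simp
next
  case (Suc i)
  have "(phi ^^ i) (phi g) = 0" using Suc.prems by (simp add: funpow_swap1)
  then have "phi g = 0" using Suc.IH by blast
  then show ?case using assms(1) unfolding x_torsion_free_def by blast
qed

lemma kill:
  assumes fm: "frob_module scale p phi" and tf: "x_torsion_free phi"
    and k: "n \<le> p ^ i" and h: "\<forall>g. scale (r ^ n) ((phi ^^ i) g) = 0"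
  shows "scale r g = 0"
proof -
  have m: "module scale" using fm unfolding frob_module_def by blast
  have "(phi ^^ i) (scale r g) = scale (r ^ (p ^ i)) ((phi ^^ i) g)"
    using iter_scale[OF fm] by blast
  also have "r ^ (p ^ i) = r ^ (p ^ i - n) * r ^ n"
    using k by (simp add: power_add[symmetric])
  also have "scale (r ^ (p ^ i - n) * r ^ n) ((phi ^^ i) g) = scale (r ^ (p ^ i - n)) (scale (r ^ n) ((phi ^^ i) g))"
    using module.scale_scale[OF m] by metis
  also have "\<dots> = 0" using h module.scale_zero_right[OF m] by simp
  finally show ?thesis using iter_tf[OF tf] by blast
qed

theorem lemma1p9:
  fixes scale :: "'a::comm_ring_1 \<Rightarrow> 'g::ab_group_add \<Rightarrow> 'g"
    and phi :: "'g \<Rightarrow> 'g" and p :: nat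
  assumes "noetherian_ring TYPE('a)"
    and "prime p" and "CHAR('a) = p"
    and "frob_module scale p phi"
    and "x_torsion_free phi"
  shows "\<exists>b :: 'a set. radical_ideal b \<and> grann scale phi = ext_ideal b
            \<and> ext_ideal b = graded_ideal b"
proof -
  note fm = assms(4) and tf = assms(5)
  have m: "module scale" using fm unfolding frob_module_def by blast
  have p2: "p \<ge> 2" using assms(2) prime_ge_2_nat by blast
  define b where "b = {r. \<forall>g. scale r g = 0}"
  have ideal: "is_ideal b"
    unfolding is_ideal_def b_def
    using module.scale_zero_left[OF m] module.scale_left_distrib[OF m]
      module.scale_scale[OF m, symmetric] module.scale_zero_right[OF m]
    by auto
  have rad: "radical_ideal b"
    unfolding radical_ideal_def
  proof (intro conjI ideal allI impI)
    fix r :: 'a and n :: nat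
    assume "n > 0" "r ^ n \<in> b"
    have "(2::nat) ^ n \<le> p ^ n" using p2 by (simp add: power_mono)
    hence "n < p ^ n" using less_exp[of n] by linarith
    show "r \<in> b" unfolding b_def
    proof (intro CollectI allI)
      fix g
      have "\<forall>g. scale (r ^ n) ((phi ^^ n) g) = 0" using \<open>r ^ n \<in> b\<close> b_def by blast
      thus "scale r g = 0" using kill[OF fm tf, of n n r] \<open>n < p ^ n\<close> by simp
    qed
  qed
  have gr: "grann scale phi = graded_ideal b"
  proof (rule set_eqI, rule iffI)
    fix c assume c: "c \<in> grann scale phi"
    have "c i \<in> b" for i unfolding b_def
    proof (intro CollectI allI)
      fix g
      have "\<forall>g. scale (c i ^ 1) ((phi ^^ i) g) = 0" using c unfolding grann_def by simp
      moreover have "1 \<le> p ^ i" using p2 by simp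
      ultimately show "scale (c i) g = 0" using kill[OF fm tf, of 1 i "c i"] by simp
    qed
    thus "c \<in> graded_ideal b" using c unfolding grann_def graded_ideal_def by simp
  next
    fix c assume "c \<in> graded_ideal b"
    thus "c \<in> grann scale phi" unfolding grann_def graded_ideal_def b_def by simp
  qed
  have eg: "ext_ideal b = graded_ideal b"
  proof (rule set_eqI, rule iffI)
    fix c assume "c \<in> ext_ideal b"
    then obtain n :: nat and bs :: "nat \<Rightarrow> 'a" and hs where h: "\<forall>j<n. bs j \<in> b \<and> hs j \<in> skew_elems"
      and c: "c = (\<lambda>i. \<Sum>j<n. bs j * hs j i)" unfolding ext_ideal_def by auto
    have sub: "{i. c i \<noteq> 0} \<subseteq> (\<Union>j<n. {i. hs j i \<noteq> 0})"
    proof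
      fix i assume "i \<in> {i. c i \<noteq> 0}"
      hence "(\<Sum>j<n. bs j * hs j i) \<noteq> 0" unfolding c by simp
      hence "\<exists>j\<in>{..<n}. bs j * hs j i \<noteq> 0" by (meson sum.neutral)
      then obtain j where "j < n" "bs j * hs j i \<noteq> 0" by blast
      thus "i \<in> (\<Union>j<n. {i. hs j i \<noteq> 0})" by (metis (mono_tags) mult_zero_right lessThan_iff UN_I mem_Collect_eq)
    qed
    have "finite (\<Union>j<n. {i. hs j i \<noteq> 0})" using h unfolding skew_elems_def by auto
    hence fin: "c \<in> skew_elems" using sub finite_subset unfolding skew_elems_def by blast
    have sumin: "\<And>A. finite A \<Longrightarrow> A \<subseteq> {..<n} \<Longrightarrow> (\<Sum>j\<in>A. bs j * hs j i) \<in> b" for i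
    proof -
      fix A :: "nat set" assume "finite A" "A \<subseteq> {..<n}"
      thus "(\<Sum>j\<in>A. bs j * hs j i) \<in> b"
      proof (induction A rule: finite_induct)
        case empty then show ?case using ideal unfolding is_ideal_def by simp
      next
        case (insert x F)
        have "bs x * hs x i \<in> b" using h insert ideal unfolding is_ideal_def
          by (metis insert_subset lessThan_iff mult.commute)
        then show ?case using insert ideal unfolding is_ideal_def by simp
      qed
    qed
    have "c i \<in> b" for i using sumin[of "{..<n}" i] unfolding c by simp
    thus "c \<in> graded_ideal b" using fin unfolding graded_ideal_def by simp
  next
    fix c assume c: "c \<in> graded_ideal b"
    hence fin: "finite {i. c i \<noteq> 0}" unfolding graded_ideal_def skew_elems_def by simp
    obtain N where N: "\<forall>i\<in>{i. c i \<noteq> 0}. i < N"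
      using fin unfolding finite_nat_set_iff_bounded by blast
    define hs where "hs = (\<lambda>(j::nat) (i::nat). if i = j then (1::'a) else 0)"
    have hsk: "hs j \<in> skew_elems" for j unfolding hs_def skew_elems_def
      by (simp add: finite_subset[of _ "{j}"])
    have eq: "c = (\<lambda>i. \<Sum>j<N. c j * hs j i)"
    proof
      fix i
      have "(\<Sum>j<N. c j * hs j i) = (\<Sum>j<N. if i = j then c j else 0)"
        unfolding hs_def by (rule sum.cong) auto
      also have "\<dots> = (if i \<in> {..<N} then c i else 0)" by (simp add: sum.delta)
      also have "\<dots> = c i" using N by auto
      finally show "c i = (\<Sum>j<N. c j * hs j i)" by simp
    qed
    show "c \<in> ext_ideal b" unfolding ext_ideal_def
      using c hsk eq unfolding graded_ideal_def by blast
  qed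
  show ?thesis using rad gr eg by blast
qed

end
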